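(* Let $X\in\mathbb{R}^{n\times D}$, labels $y\in\{1,\dots,K\}^n$, sample weights $v\in\mathbb{R}^n$, and consider weighted multiclass logistic regression in variables $W\in\mathbb{R}^{D\times K}$, $b\in\mathbb{R}^K$: $$\min F(W,b)=-\sum_{i=1}^n v_i\log\hat y_{i,y_i},\qquad \hat y_{ic}=\frac{\exp\big(b_c+\sum_{k}X_{ik}W_{kc}\big)}{\sum_{l=1}^K\exp\big(b_l+\sum_kX_{ik}W_{kl}\big)}.$$ Let $\mathcal{Q}$ be a partition of $\{1,\dots,D\}$ and let $\mathcal{P}$ be the partition of $\{1,\dots,n\}$ in which $i_1,i_2$ share a color iff $\sum_{j\in T}X_{i_1j}=\sum_{j\in T}X_{i_2j}$ for all $T\in\mathcal{Q}$. Assume (1) $(\mathcal{P},\mathcal{Q})$ is equitable on $X$; (2) for every $c\in\{1,\dots,K\}$, $\sum_{i=1}^n v_iX_{ij_1}\mathbf{1}\{y_i=c\}=\sum_{i=1}^n v_iX_{ij_2}\mathbf{1}\{y_i=c\}$ whenever $j_1,j_2$ share a color of $\mathcal{Q}$; (3) $v_i$ is constant on each color of $\mathcal{P}$. Then for every $b$ and every $\hat W$ whose rows satisfy $\hat W_{j_1,\cdot}=\hat W_{j_2,\cdot}$ whenever $j_1,j_2$ share a color of $\mathcal{Q}$, we have $\frac{\partial F}{\partial W_{j_1c}}(\hat W,b)=\frac{\partial F}{\partial W_{j_2c}}(\hat W,b)$ for every class $c$ and all $j_1,j_2$ in the same color of $\mathcal{Q}$. Hence the partition of the variables $W_{jc}$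 into colors $T\times\{c\}$ ($T\in\mathcal{Q}$, $c\le K$), together with singletons for each $b_c$, is a reduction coloring.
   Context: A partition of a finite set is a set of nonempty pairwise disjoint subsets ("colors") covering it. A pair $(\mathcal{P},\mathcal{Q})$ of partitions of the row and column indices of $A$ is equitable on $A$ if for every $S\in\mathcal{P}$, $T\in\mathcal{Q}$: $\sum_{j\in T}A_{ij}$ is the same for all $i\in S$ and $\sum_{i\in S}A_{ij}$ is the same for all $j\in T$. A reduction coloring of an unconstrained differentiable convex program $\min F(x)$ is a partition of the variables such that at every point constant on each color, the partial derivatives of $F$ with respect to variables in a common color coincide. *)

theory Defs
  imports "HOL-Library.Disjoint_Sets" "HOL-Analysis.Analysis"
begin

definition equitable :: "(nat \<Rightarrow> nat \<Rightarrow> real) \<Rightarrow> nat set set \<Rightarrow> nat set set \<Rightarrow> bool" where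
  "equitable A P Q \<longleftrightarrow>
     (\<forall>S\<in>P. \<forall>T\<in>Q.
        (\<forall>i1\<in>S. \<forall>i2\<in>S. (\<Sum>j\<in>T. A i1 j) = (\<Sum>j\<in>T. A i2 j)) \<and>
        (\<forall>j1\<in>T. \<forall>j2\<in>T. (\<Sum>i\<in>S. A i j1) = (\<Sum>i\<in>S. A i j2)))"

definition induced_row_partition :: "nat \<Rightarrow> (nat \<Rightarrow> nat \<Rightarrow> real) \<Rightarrow> nat set set \<Rightarrow> nat set set" where
  "induced_row_partition n X Q =
     {{i2 \<in> {1..n}. \<forall>T\<in>Q. (\<Sum>j\<in>T. X i2 j) = (\<Sum>j\<in>T. X i1 j)} | i1. i1 \<in> {1..n}}"

text \<open>Variables: Inl (k,c) is W_{kc}, Inr c is b_c. A point is an assignment of reals to variables.\<close>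
type_synonym lvar = "(nat \<times> nat) + nat"

definition logit :: "nat \<Rightarrow> (nat \<Rightarrow> nat \<Rightarrow> real) \<Rightarrow> (lvar \<Rightarrow> real) \<Rightarrow> nat \<Rightarrow> nat \<Rightarrow> real" where
  "logit D X x i c = x (Inr c) + (\<Sum>k\<in>{1..D}. X i k * x (Inl (k, c)))"

definition yhat :: "nat \<Rightarrow> nat \<Rightarrow> (nat \<Rightarrow> nat \<Rightarrow> real) \<Rightarrow> (lvar \<Rightarrow> real) \<Rightarrow> nat \<Rightarrow> nat \<Rightarrow> real" where
  "yhat D K X x i c = exp (logit D X x i c) / (\<Sum>l\<in>{1..K}. exp (logit D X x i l))"

definition logreg_obj :: "nat \<Rightarrow> nat \<Rightarrow> nat \<Rightarrow> (nat \<Rightarrow> nat \<Rightarrow> real) \<Rightarrow> (nat \<Rightarrow> nat) \<Rightarrow> (nat \<Rightarrow> real)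
    \<Rightarrow> (lvar \<Rightarrow> real) \<Rightarrow> real" where
  "logreg_obj n D K X y v x = - (\<Sum>i\<in>{1..n}. v i * ln (yhat D K X x i (y i)))"

definition has_partial :: "(('v \<Rightarrow> real) \<Rightarrow> real) \<Rightarrow> ('v \<Rightarrow> real) \<Rightarrow> 'v \<Rightarrow> real \<Rightarrow> bool" where
  "has_partial F x u d \<longleftrightarrow> ((\<lambda>t. F (x(u := t))) has_real_derivative d) (at (x u))"

definition partial :: "(('v \<Rightarrow> real) \<Rightarrow> real) \<Rightarrow> ('v \<Rightarrow> real) \<Rightarrow> 'v \<Rightarrow> real" where
  "partial F x u = deriv (\<lambda>t. F (x(u := t))) (x u)"

definition reduction_coloring :: "(('v \<Rightarrow> real) \<Rightarrow> real) \<Rightarrow> 'v set \<Rightarrow> 'v set set \<Rightarrow> bool" where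
  "reduction_coloring F V C \<longleftrightarrow> partition_on V C \<and>
     (\<forall>x. (\<forall>S\<in>C. \<forall>u\<in>S. \<forall>w\<in>S. x u = x w) \<longrightarrow>
          (\<forall>S\<in>C. \<forall>u\<in>S. \<forall>w\<in>S. partial F x u = partial F x w))"

definition logreg_vars :: "nat \<Rightarrow> nat \<Rightarrow> lvar set" where
  "logreg_vars D K = Inl ` ({1..D} \<times> {1..K}) \<union> Inr ` {1..K}"

definition lifted_coloring :: "nat set set \<Rightarrow> nat \<Rightarrow> lvar set set" where
  "lifted_coloring Q K =
     {Inl ` (T \<times> {c}) | T c. T \<in> Q \<and> c \<in> {1..K}} \<union> {{Inr c} | c. c \<in> {1..K}}"

end

theory Submission
  imports Defs
begin

lemma logit_upd:
  assumes j: "j \<in> {1..D}"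
  shows "logit D X (x(Inl(j,c) := t)) i l = logit D X x i l + (if l = c then X i j * (t - x (Inl(j,c))) else 0)"
proof -
  have "(\<Sum>k\<in>{1..D}. X i k * (x(Inl(j,c):=t)) (Inl(k,l))) =
        (\<Sum>k\<in>{1..D}. X i k * x (Inl(k,l)) + (if k = j then (if l = c then X i j * (t - x(Inl(j,c))) else 0) else 0))"
    by (rule sum.cong) (auto simp: algebra_simps)
  also have "\<dots> = (\<Sum>k\<in>{1..D}. X i k * x (Inl(k,l))) + (if l = c then X i j * (t - x (Inl(j,c))) else 0)"
    using j by (simp add: sum.distrib)
  finally show ?thesis by (simp add: logit_def)
qed

lemma deriv_W:
  assumes j: "j \<in> {1..D}" and c: "c \<in> {1..K}"
  shows "has_partial (logreg_obj n D K X y v) x (Inl(j,c))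
     (\<Sum>i\<in>{1..n}. v i * (X i j * yhat D K X x i c - (if y i = c then X i j else 0)))"
proof -
  define a where "a = x (Inl(j,c))"
  define L where "L i l t = logit D X x i l + (if l = c then X i j * (t - a) else 0)" for i l t
  have K: "{1..K} \<noteq> {}" using c by auto
  have Spos: "(\<Sum>l\<in>{1..K}. exp (L i l t)) > 0" for i t using K by (intro sum_pos) auto
  have yh: "yhat D K X (x(Inl(j,c):=t)) i l' = exp (L i l' t) / (\<Sum>l\<in>{1..K}. exp (L i l t))" for i l' t
    unfolding L_def a_def by (simp add: yhat_def logit_upd[OF j])
  have eq: "logreg_obj n D K X y v (x(Inl(j,c):=t)) =
      - (\<Sum>i\<in>{1..n}. v i * (L i (y i) t - ln (\<Sum>l\<in>{1..K}. exp (L i l t))))" for t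
  proof -
    have "ln (yhat D K X (x(Inl(j,c):=t)) i (y i)) = L i (y i) t - ln (\<Sum>l\<in>{1..K}. exp (L i l t))" for i
      unfolding yh using Spos[of i t] by (subst ln_div) auto
    then show ?thesis unfolding logreg_obj_def by simp
  qed
  have La: "L i l a = logit D X x i l" for i l by (simp add: L_def)
  have dL: "((\<lambda>t. L i l t) has_real_derivative (if l = c then X i j else 0)) (at a)" for i l
    unfolding L_def by (auto intro!: derivative_eq_intros)
  have dS: "((\<lambda>t. \<Sum>l\<in>{1..K}. exp (L i l t)) has_real_derivative
      (\<Sum>l\<in>{1..K}. exp (L i l a) * (if l = c then X i j else 0))) (at a)" for i
    by (rule DERIV_sum) (rule DERIV_fun_exp[OF dL])
  have sS: "(\<Sum>l\<in>{1..K}. exp (L i l a) * (if l = c then X i j else 0)) = exp (logit D X x i c) * X i j" for i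
  proof -
    have "(\<Sum>l\<in>{1..K}. exp (L i l a) * (if l = c then X i j else 0)) =
          (\<Sum>l\<in>{1..K}. if l = c then exp (L i c a) * X i j else 0)"
      by (rule sum.cong) auto
    also have "\<dots> = exp (logit D X x i c) * X i j" using c by (simp add: La)
    finally show ?thesis .
  qed
  have dln: "((\<lambda>t. ln (\<Sum>l\<in>{1..K}. exp (L i l t))) has_real_derivative
      (exp (logit D X x i c) * X i j) / (\<Sum>l\<in>{1..K}. exp (L i l a))) (at a)" for i
    using DERIV_chain2[OF DERIV_ln_divide[OF Spos[of i a]] dS[of i]] sS[of i] by (simp add: divide_simps)
  have di: "((\<lambda>t. v i * (L i (y i) t - ln (\<Sum>l\<in>{1..K}. exp (L i l t)))) has_real_derivative
      - (v i * (X i j * yhat D K X x i c - (if y i = c then X i j else 0)))) (at a)" for i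
  proof -
    have "((\<lambda>t. v i * (L i (y i) t - ln (\<Sum>l\<in>{1..K}. exp (L i l t)))) has_real_derivative
      v i * ((if y i = c then X i j else 0) - (exp (logit D X x i c) * X i j) / (\<Sum>l\<in>{1..K}. exp (L i l a)))) (at a)"
      by (intro DERIV_cmult DERIV_diff dL dln)
    moreover have "yhat D K X x i c = exp (logit D X x i c) / (\<Sum>l\<in>{1..K}. exp (L i l a))"
      by (simp add: yhat_def La)
    ultimately show ?thesis by (simp add: algebra_simps)
  qed
  have "((\<lambda>t. - (\<Sum>i\<in>{1..n}. v i * (L i (y i) t - ln (\<Sum>l\<in>{1..K}. exp (L i l t))))) has_real_derivative
      - (\<Sum>i\<in>{1..n}. - (v i * (X i j * yhat D K X x i c - (if y i = c then X i j else 0))))) (at a)"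
    by (intro DERIV_minus DERIV_sum di)
  then show ?thesis unfolding has_partial_def eq a_def[symmetric] by (simp add: sum_negf)
qed

lemma sum_over_partition:
  assumes Q: "partition_on {1..(D::nat)} Q"
  shows "(\<Sum>k\<in>{1..D}. f k) = (\<Sum>T\<in>Q. \<Sum>k\<in>T. (f k :: real))"
proof -
  have U: "\<Union>Q = {1..D}" using Q by (simp add: partition_on_def)
  have fin: "\<forall>T\<in>Q. finite T"
  proof
    fix T assume "T \<in> Q"
    then have "T \<subseteq> {1..D}" using U by blast
    then show "finite T" by (rule finite_subset) simp
  qed
  have dj: "\<forall>A\<in>Q. \<forall>B\<in>Q. A \<noteq> B \<longrightarrow> A \<inter> B = {}"
    using Q by (simp add: partition_on_def disjoint_def)
  have "sum f (\<Union>Q) = sum (sum f) Q" using sum.Union_disjoint[OF fin dj, of f] by (simp add: comp_def)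
  then show ?thesis using U by simp
qed

lemma logit_rows:
  assumes Q: "partition_on {1..D} Q"
    and xc: "\<forall>T\<in>Q. \<forall>j1\<in>T. \<forall>j2\<in>T. x (Inl (j1, l)) = x (Inl (j2, l))"
    and r: "\<forall>T\<in>Q. (\<Sum>j\<in>T. X i1 j) = (\<Sum>j\<in>T. X i2 j)"
  shows "logit D X x i1 l = logit D X x i2 l"
proof -
  have U: "\<Union>Q = {1..D}" "{} \<notin> Q" using Q by (auto simp: partition_on_def)
  have inner: "(\<Sum>k\<in>T. X i k * x (Inl (k, l))) = x (Inl (SOME k. k \<in> T, l)) * (\<Sum>k\<in>T. X i k)"
    if T: "T \<in> Q" for T i
  proof -
    have ne: "(SOME k. k \<in> T) \<in> T" using T U(2) by (metis all_not_in_conv someI)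
    show ?thesis unfolding sum_distrib_left
    proof (rule sum.cong[OF refl])
      fix k assume k: "k \<in> T"
      have "x (Inl (k, l)) = x (Inl (SOME k. k \<in> T, l))" using xc T ne k by blast
      then show "X i k * x (Inl (k, l)) = x (Inl (SOME k. k \<in> T, l)) * X i k" by simp
    qed
  qed
  have rw: "(\<Sum>k\<in>{1..D}. X i k * x (Inl (k, l))) = (\<Sum>T\<in>Q. x (Inl (SOME k. k \<in> T, l)) * (\<Sum>k\<in>T. X i k))" for i
    unfolding sum_over_partition[OF Q] by (rule sum.cong[OF refl]) (rule inner)
  have "(\<Sum>T\<in>Q. x (Inl (SOME k. k \<in> T, l)) * (\<Sum>k\<in>T. X i1 k)) = (\<Sum>T\<in>Q. x (Inl (SOME k. k \<in> T, l)) * (\<Sum>k\<in>T. X i2 k))"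
    by (rule sum.cong[OF refl]) (use r in simp)
  then show ?thesis unfolding logit_def rw by simp
qed

lemma class_sum:
  assumes Q: "partition_on {1..D} Q"
    and eq: "equitable X (induced_row_partition n X Q) Q"
    and T0: "T0 \<in> Q" and j1: "j1 \<in> T0" and j2: "j2 \<in> T0"
    and g: "\<And>i1 i2. i1 \<in> {1..n} \<Longrightarrow> i2 \<in> {1..n} \<Longrightarrow>
              (\<forall>T\<in>Q. (\<Sum>j\<in>T. X i1 j) = (\<Sum>j\<in>T. X i2 j)) \<Longrightarrow> g i1 = (g i2 :: real)"
  shows "(\<Sum>i\<in>{1..n}. g i * X i j1) = (\<Sum>i\<in>{1..n}. g i * X i j2)"
proof -
  define cls where "cls i = {i2 \<in> {1..n}. \<forall>T\<in>Q. (\<Sum>j\<in>T. X i2 j) = (\<Sum>j\<in>T. X i j)}" for i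
  have P: "induced_row_partition n X Q = cls ` {1..n}"
    unfolding induced_row_partition_def cls_def by auto
  have fib: "{i \<in> {1..n}. cls i = cls i0} = cls i0" if "i0 \<in> {1..n}" for i0
  proof (intro equalityI subsetI)
    fix i assume "i \<in> {i \<in> {1..n}. cls i = cls i0}"
    then have i1: "i \<in> {1..n}" and "cls i = cls i0" by auto
    have "i \<in> cls i" using i1 by (simp add: cls_def)
    then show "i \<in> cls i0" using \<open>cls i = cls i0\<close> by simp
  next
    fix i assume "i \<in> cls i0"
    then show "i \<in> {i \<in> {1..n}. cls i = cls i0}" unfolding cls_def by auto
  qed
  have cl: "(\<Sum>i\<in>cls i0. g i * X i j) = g i0 * (\<Sum>i\<in>cls i0. X i j)" if "i0 \<in> {1..n}" for i0 j
    unfolding sum_distrib_left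
  proof (rule sum.cong)
    fix i assume "i \<in> cls i0"
    then have "g i = g i0" using g[of i i0] that by (auto simp: cls_def)
    then show "g i * X i j = g i0 * X i j" by simp
  qed simp
  have S: "(\<Sum>i\<in>{1..n}. g i * X i j) = (\<Sum>S\<in>cls ` {1..n}. \<Sum>i\<in>S. g i * X i j)" for j
  proof -
    have "(\<Sum>i\<in>{1..n}. g i * X i j) = (\<Sum>S\<in>cls ` {1..n}. \<Sum>i\<in>{i \<in> {1..n}. cls i = S}. g i * X i j)"
      by (rule sum.image_gen) simp
    also have "\<dots> = (\<Sum>S\<in>cls ` {1..n}. \<Sum>i\<in>S. g i * X i j)"
    proof (rule sum.cong)
      fix S assume "S \<in> cls ` {1..n}"
      then obtain i0 where i0: "i0 \<in> {1..n}" "S = cls i0" by blast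
      show "(\<Sum>i\<in>{i \<in> {1..n}. cls i = S}. g i * X i j) = (\<Sum>i\<in>S. g i * X i j)"
        unfolding i0(2) fib[OF i0(1)] ..
    qed simp
    finally show ?thesis .
  qed
  have *: "(\<Sum>i\<in>cls i0. g i * X i j1) = (\<Sum>i\<in>cls i0. g i * X i j2)" if "i0 \<in> {1..n}" for i0
  proof -
    have "cls i0 \<in> induced_row_partition n X Q" using P that by auto
    then have "(\<Sum>i\<in>cls i0. X i j1) = (\<Sum>i\<in>cls i0. X i j2)"
      using eq T0 j1 j2 unfolding equitable_def by blast
    then show ?thesis using cl[OF that] by simp
  qed
  show ?thesis unfolding S by (rule sum.cong) (use * in auto)
qed


lemma lifted_cases:
  assumes "S \<in> lifted_coloring Q K"
  obtains (Inl_col) T c where "T \<in> Q" "c \<in> {1..K}" "S = Inl ` (T \<times> {c})"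
    | (Inr_col) c where "c \<in> {1..K}" "S = {Inr c}"
  using assms unfolding lifted_coloring_def by blast

lemma mem_Inl_img:
  assumes "u \<in> Inl ` (T \<times> {c})"
  obtains j where "j \<in> T" "u = Inl (j, c)"
  using assms by auto

lemma partial_eq:
  assumes "has_partial F x u d"
  shows "partial F x u = d"
  using assms unfolding has_partial_def partial_def by (rule DERIV_imp_deriv)

lemma lifted_partition:
  assumes Q_part: "partition_on {1..D} Q"
  shows "partition_on (logreg_vars D K) (lifted_coloring Q K)"
proof -
  have U: "\<Union>Q = {1..D}" using Q_part by (simp add: partition_on_def)
  have ne: "{} \<notin> Q" using Q_part by (simp add: partition_on_def)
  have dq: "\<forall>A\<in>Q. \<forall>B\<in>Q. A \<noteq> B \<longrightarrow> A \<inter> B = {}"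
    using Q_part by (simp add: partition_on_def disjoint_def)
  have uniq: "T1 = T2" if "T1 \<in> Q" "T2 \<in> Q" "j \<in> T1" "j \<in> T2" for T1 T2 j
    using dq that by blast
  show ?thesis unfolding partition_on_def
  proof (intro conjI)
    show "\<Union>(lifted_coloring Q K) = logreg_vars D K"
    proof (intro equalityI subsetI)
      fix u assume "u \<in> \<Union>(lifted_coloring Q K)"
      then obtain S where S: "S \<in> lifted_coloring Q K" "u \<in> S" by (rule UnionE)
      from S(1) show "u \<in> logreg_vars D K"
      proof (cases rule: lifted_cases)
        case (Inl_col T c)
        from S(2) Inl_col(3) have "u \<in> Inl ` (T \<times> {c})" by simp
        then obtain j where j: "j \<in> T" "u = Inl (j, c)" by (rule mem_Inl_img)
        have "j \<in> {1..D}" using U Inl_col(1) j(1) by blast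
        then have "(j, c) \<in> {1..D} \<times> {1..K}" using Inl_col(2) by simp
        then show ?thesis unfolding logreg_vars_def j(2) by (intro UnI1 imageI)
      next
        case (Inr_col c)
        from S(2) Inr_col(2) have "u = Inr c" by simp
        then show ?thesis unfolding logreg_vars_def using Inr_col(1) by (intro UnI2) simp
      qed
    next
      fix u assume "u \<in> logreg_vars D K"
      then have "u \<in> Inl ` ({1..D} \<times> {1..K}) \<union> Inr ` {1..K}"
        unfolding logreg_vars_def .
      then show "u \<in> \<Union>(lifted_coloring Q K)"
      proof (rule UnE)
        assume "u \<in> Inl ` ({1..D} \<times> {1..K})"
        then obtain p where p: "p \<in> {1..D} \<times> {1..K}" "u = Inl p" by (rule imageE)
        obtain j c where jc: "p = (j, c)" by (cases p)
        have jD: "j \<in> {1..D}" and cK: "c \<in> {1..K}" using p(1) jc by simp_all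
        then obtain T where T: "T \<in> Q" "j \<in> T" using U by blast
        have "Inl ` (T \<times> {c}) \<in> lifted_coloring Q K" unfolding lifted_coloring_def using T(1) cK by blast
        moreover have "u \<in> Inl ` (T \<times> {c})" unfolding p(2) jc using T(2) by (intro imageI) simp
        ultimately show ?thesis by (rule UnionI)
      next
        assume "u \<in> Inr ` {1..K}"
        then obtain c where cK: "c \<in> {1..K}" and uc: "u = Inr c" by (rule imageE)
        have "{Inr c} \<in> lifted_coloring Q K" unfolding lifted_coloring_def using cK by blast
        moreover have "u \<in> {Inr c}" using uc by simp
        ultimately show ?thesis by (rule UnionI)
      qed
    qed
    show "disjoint (lifted_coloring Q K)"
      unfolding disjoint_def
    proof (intro ballI impI)
      fix S1 S2 assume S1: "S1 \<in> lifted_coloring Q K" and S2: "S2 \<in> lifted_coloring Q K" and ne12: "S1 \<noteq> S2"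
      show "S1 \<inter> S2 = {}"
      proof (rule ccontr)
        assume "S1 \<inter> S2 \<noteq> {}"
        then obtain u where u1: "u \<in> S1" and u2: "u \<in> S2" by blast
        from S1 show False
        proof (cases rule: lifted_cases)
          case (Inl_col T c)
          note c1 = this
          from u1 c1(3) have "u \<in> Inl ` (T \<times> {c})" by simp
          then obtain j where j: "j \<in> T" "u = Inl (j, c)" by (rule mem_Inl_img)
          from S2 show False
          proof (cases rule: lifted_cases)
            case (Inl_col T' c')
            note c2 = this
            from u2 c2(3) have "u \<in> Inl ` (T' \<times> {c'})" by simp
            then obtain j' where j': "j' \<in> T'" "u = Inl (j', c')" by (rule mem_Inl_img)
            from j(2) j'(2) have jj: "j = j'" and cc: "c = c'" by simp_all
            have TT: "T = T'" using uniq[OF c1(1) c2(1) j(1)] j'(1) jj by simp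
            have "S1 = S2" unfolding c1(3) c2(3) TT cc ..
            then show False using ne12 by contradiction
          next
            case (Inr_col c')
            from u2 Inr_col(2) have "u = Inr c'" by simp
            then show False using j(2) by simp
          qed
        next
          case (Inr_col c)
          note c1 = this
          from u1 c1(2) have uc: "u = Inr c" by simp
          from S2 show False
          proof (cases rule: lifted_cases)
            case (Inl_col T' c')
            from u2 Inl_col(3) have "u \<in> Inl ` (T' \<times> {c'})" by simp
            then obtain j' where j': "j' \<in> T'" "u = Inl (j', c')" by (rule mem_Inl_img)
            then show False using uc by simp
          next
            case (Inr_col c')
            from u2 Inr_col(2) have "u = Inr c'" by simp
            then have "c = c'" using uc by simp
            then have "S1 = S2" unfolding c1(2) Inr_col(2) by simp
            then show False using ne12 by contradiction
          qed
        qed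
      qed
    qed
    show "{} \<notin> lifted_coloring Q K"
    proof
      assume "{} \<in> lifted_coloring Q K"
      then show False
      proof (cases rule: lifted_cases)
        case (Inl_col T c)
        have "T \<noteq> {}" using ne Inl_col(1) by auto
        then obtain j where "j \<in> T" by auto
        then have "Inl (j, c) \<in> Inl ` (T \<times> {c})" by simp
        then show False using Inl_col(3) by simp
      next
        case (Inr_col c)
        then show False by simp
      qed
    qed
  qed
qed

theorem theorem5:
  fixes n D K :: nat and X :: "nat \<Rightarrow> nat \<Rightarrow> real" and y :: "nat \<Rightarrow> nat"
    and v :: "nat \<Rightarrow> real" and Q :: "nat set set"
  assumes labels: "\<forall>i\<in>{1..n}. y i \<in> {1..K}"
    and Q_part: "partition_on {1..D} Q"
    and eq: "equitable X (induced_row_partition n X Q) Q"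
    and lab_bal: "\<forall>c\<in>{1..K}. \<forall>T\<in>Q. \<forall>j1\<in>T. \<forall>j2\<in>T.
        (\<Sum>i\<in>{1..n}. v i * X i j1 * (if y i = c then 1 else 0)) =
        (\<Sum>i\<in>{1..n}. v i * X i j2 * (if y i = c then 1 else 0))"
    and v_const: "\<forall>S\<in>induced_row_partition n X Q. \<forall>i1\<in>S. \<forall>i2\<in>S. v i1 = v i2"
  shows "(\<forall>x. (\<forall>T\<in>Q. \<forall>j1\<in>T. \<forall>j2\<in>T. \<forall>c\<in>{1..K}. x (Inl (j1, c)) = x (Inl (j2, c))) \<longrightarrow>
            (\<forall>T\<in>Q. \<forall>j1\<in>T. \<forall>j2\<in>T. \<forall>c\<in>{1..K}. \<exists>d.
               has_partial (logreg_obj n D K X y v) x (Inl (j1, c)) d \<and>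
               has_partial (logreg_obj n D K X y v) x (Inl (j2, c)) d))
         \<and> reduction_coloring (logreg_obj n D K X y v) (logreg_vars D K) (lifted_coloring Q K)"
  proof -
  have U: "\<Union>Q = {1..D}" using Q_part by (simp add: partition_on_def)
  have ne: "{} \<notin> Q" using Q_part by (simp add: partition_on_def)
  have dq: "\<forall>A\<in>Q. \<forall>B\<in>Q. A \<noteq> B \<longrightarrow> A \<inter> B = {}"
    using Q_part by (simp add: partition_on_def disjoint_def)
  have uniq: "T1 = T2" if "T1 \<in> Q" "T2 \<in> Q" "j \<in> T1" "j \<in> T2" for T1 T2 j
    using dq that by blast
  have part1: "\<forall>T\<in>Q. \<forall>j1\<in>T. \<forall>j2\<in>T. \<forall>c\<in>{1..K}. \<exists>d.
               has_partial (logreg_obj n D K X y v) x (Inl (j1, c)) d \<and>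
               has_partial (logreg_obj n D K X y v) x (Inl (j2, c)) d"
    if hx: "\<forall>T\<in>Q. \<forall>j1\<in>T. \<forall>j2\<in>T. \<forall>c\<in>{1..K}. x (Inl (j1, c)) = x (Inl (j2, c))" for x
  proof (intro ballI)
    fix T j1 j2 c assume T: "T \<in> Q" and j1: "j1 \<in> T" and j2: "j2 \<in> T" and c: "c \<in> {1..K}"
    have jD: "j \<in> {1..D}" if "j \<in> T" for j using U T that by blast
    define dd where "dd j = (\<Sum>i\<in>{1..n}. v i * (X i j * yhat D K X x i c - (if y i = c then X i j else 0)))" for j
    have dd2: "dd j = (\<Sum>i\<in>{1..n}. (v i * yhat D K X x i c) * X i j)
         - (\<Sum>i\<in>{1..n}. v i * X i j * (if y i = c then 1 else 0))" for j
      unfolding dd_def sum_subtractf[symmetric] by (rule sum.cong) (auto simp: algebra_simps)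
    have g: "v i1 * yhat D K X x i1 c = v i2 * yhat D K X x i2 c"
      if i1: "i1 \<in> {1..n}" and i2: "i2 \<in> {1..n}" and r: "\<forall>T\<in>Q. (\<Sum>j\<in>T. X i1 j) = (\<Sum>j\<in>T. X i2 j)" for i1 i2
    proof -
      define S' where "S' = {i2 \<in> {1..n}. \<forall>T\<in>Q. (\<Sum>j\<in>T. X i2 j) = (\<Sum>j\<in>T. X i1 j)}"
      have S: "S' \<in> induced_row_partition n X Q"
        unfolding induced_row_partition_def S'_def using i1 by blast
      have m1: "i1 \<in> S'" unfolding S'_def using i1 by simp
      have m2: "i2 \<in> S'" unfolding S'_def using i2 r by simp
      have vv: "v i1 = v i2" using bspec[OF v_const S] m1 m2 by blast
      have lg: "logit D X x i1 l = logit D X x i2 l" if "l \<in> {1..K}" for l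
      proof (rule logit_rows[OF Q_part _ r])
        show "\<forall>T\<in>Q. \<forall>j1\<in>T. \<forall>j2\<in>T. x (Inl (j1, l)) = x (Inl (j2, l))"
          using hx that by blast
      qed
      have den: "(\<Sum>l\<in>{1..K}. exp (logit D X x i1 l)) = (\<Sum>l\<in>{1..K}. exp (logit D X x i2 l))"
        by (rule sum.cong[OF refl]) (simp only: lg)
      have "yhat D K X x i1 c = yhat D K X x i2 c"
        unfolding yhat_def den lg[OF c] ..
      then show ?thesis using vv by simp
    qed
    have e1: "(\<Sum>i\<in>{1..n}. (v i * yhat D K X x i c) * X i j1) = (\<Sum>i\<in>{1..n}. (v i * yhat D K X x i c) * X i j2)"
      by (rule class_sum[OF Q_part eq T j1 j2]) (rule g)
    have e2: "(\<Sum>i\<in>{1..n}. v i * X i j1 * (if y i = c then 1 else 0)) = (\<Sum>i\<in>{1..n}. v i * X i j2 * (if y i = c then 1 else 0))"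
      using lab_bal c T j1 j2 by blast
    have dd: "dd j1 = dd j2" unfolding dd2 e1 e2 ..
    have h1: "has_partial (logreg_obj n D K X y v) x (Inl (j1, c)) (dd j1)"
      unfolding dd_def by (rule deriv_W[OF jD[OF j1] c])
    have h2: "has_partial (logreg_obj n D K X y v) x (Inl (j2, c)) (dd j1)"
      unfolding dd unfolding dd_def by (rule deriv_W[OF jD[OF j2] c])
    show "\<exists>d. has_partial (logreg_obj n D K X y v) x (Inl (j1, c)) d \<and>
               has_partial (logreg_obj n D K X y v) x (Inl (j2, c)) d"
      using h1 h2 by blast
  qed
  have pon: "partition_on (logreg_vars D K) (lifted_coloring Q K)"
    by (rule lifted_partition[OF Q_part])
  have part2: "\<forall>S\<in>lifted_coloring Q K. \<forall>u\<in>S. \<forall>w\<in>S. partial (logreg_obj n D K X y v) x u = partial (logreg_obj n D K X y v) x w"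
    if hS: "\<forall>S\<in>lifted_coloring Q K. \<forall>u\<in>S. \<forall>w\<in>S. x u = x w" for x
  proof (intro ballI)
    fix S u w assume S: "S \<in> lifted_coloring Q K" and u: "u \<in> S" and w: "w \<in> S"
    have hx: "\<forall>T\<in>Q. \<forall>j1\<in>T. \<forall>j2\<in>T. \<forall>c\<in>{1..K}. x (Inl (j1, c)) = x (Inl (j2, c))"
    proof (intro ballI)
      fix T j1 j2 c assume "T \<in> Q" "j1 \<in> T" "j2 \<in> T" "c \<in> {1..K}"
      then have m: "Inl ` (T \<times> {c}) \<in> lifted_coloring Q K" "Inl (j1, c) \<in> Inl ` (T \<times> {c})"
        "Inl (j2, c) \<in> Inl ` (T \<times> {c})" unfolding lifted_coloring_def by blast+
      show "x (Inl (j1, c)) = x (Inl (j2, c))" using bspec[OF bspec[OF bspec[OF hS m(1)] m(2)] m(3)] .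
    qed
    from S show "partial (logreg_obj n D K X y v) x u = partial (logreg_obj n D K X y v) x w"
    proof (cases rule: lifted_cases)
      case (Inr_col c)
      from u Inr_col(2) have "u = Inr c" by simp
      moreover from w Inr_col(2) have "w = Inr c" by simp
      ultimately show ?thesis by simp
    next
      case (Inl_col T c)
      from u Inl_col(3) have "u \<in> Inl ` (T \<times> {c})" by simp
      then obtain j1 where j1: "j1 \<in> T" "u = Inl (j1, c)" by (rule mem_Inl_img)
      from w Inl_col(3) have "w \<in> Inl ` (T \<times> {c})" by simp
      then obtain j2 where j2: "j2 \<in> T" "w = Inl (j2, c)" by (rule mem_Inl_img)
      have "\<exists>d. has_partial (logreg_obj n D K X y v) x (Inl (j1, c)) d \<and>
               has_partial (logreg_obj n D K X y v) x (Inl (j2, c)) d"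
        using part1[OF hx] Inl_col(1,2) j1(1) j2(1) by blast
      then obtain d where d1: "has_partial (logreg_obj n D K X y v) x (Inl (j1, c)) d"
        and d2: "has_partial (logreg_obj n D K X y v) x (Inl (j2, c)) d" by blast
      show ?thesis unfolding j1(2) j2(2) partial_eq[OF d1] partial_eq[OF d2] ..
    qed
  qed
  have A1: "\<forall>x. (\<forall>T\<in>Q. \<forall>j1\<in>T. \<forall>j2\<in>T. \<forall>c\<in>{1..K}. x (Inl (j1, c)) = x (Inl (j2, c))) \<longrightarrow>
            (\<forall>T\<in>Q. \<forall>j1\<in>T. \<forall>j2\<in>T. \<forall>c\<in>{1..K}. \<exists>d.
               has_partial (logreg_obj n D K X y v) x (Inl (j1, c)) d \<and>
               has_partial (logreg_obj n D K X y v) x (Inl (j2, c)) d)"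
    by (intro allI impI) (erule part1)
  have A2: "\<forall>x. (\<forall>S\<in>lifted_coloring Q K. \<forall>u\<in>S. \<forall>w\<in>S. x u = x w) \<longrightarrow>
          (\<forall>S\<in>lifted_coloring Q K. \<forall>u\<in>S. \<forall>w\<in>S. partial (logreg_obj n D K X y v) x u = partial (logreg_obj n D K X y v) x w)"
    by (intro allI impI) (erule part2)
  show ?thesis unfolding reduction_coloring_def by (rule conjI[OF A1 conjI[OF pon A2]])
qed

end
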